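(* For every $\delta\in\mathbb N$, there exist $\varepsilon > 1/4$ and a blowup $H$ of a 5-cycle with minimum degree at least $\delta$ such that $\sum_{v\in V(H)}1/(d(v) + \varepsilon) > 2$.
   Context: A blowup of a graph $F$ is a graph obtained from $F$ by replacing some vertices with cliques and replacing each edge by the complete bipartite graph between the corresponding vertex sets (i.e., vertices $x$ of $F$ are replaced by pairwise disjoint nonempty cliques $Q_x$, and for each edge $xy$ of $F$ every vertex of $Q_x$ is adjacent to every vertex of $Q_y$, with no other edges). $d(v)$ is the degree of $v$ in $H$. *)

theory Defs
  imports Main "HOL-Analysis.Analysis"
begin

definition c5_adj :: "nat \<Rightarrow> nat \<Rightarrow> bool" where
  "c5_adj x y \<longleftrightarrow> x < 5 \<and> y < 5 \<and> (y = (x + 1) mod 5 \<or> x = (y + 1) mod 5)"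

definition blowup_C5 :: "'a set \<Rightarrow> ('a \<Rightarrow> 'a \<Rightarrow> bool) \<Rightarrow> bool" where
  "blowup_C5 V E \<longleftrightarrow> finite V \<and>
     (\<forall>u v. E u v \<longrightarrow> u \<in> V \<and> v \<in> V) \<and>
     (\<exists>f. (\<forall>v\<in>V. f v < (5::nat)) \<and> (\<forall>x<5. \<exists>v\<in>V. f v = x) \<and>
          (\<forall>u\<in>V. \<forall>v\<in>V. E u v \<longleftrightarrow> u \<noteq> v \<and> (f u = f v \<or> c5_adj (f u) (f v))))"

definition degree :: "'a set \<Rightarrow> ('a \<Rightarrow> 'a \<Rightarrow> bool) \<Rightarrow> 'a \<Rightarrow> nat" where
  "degree V E v = card {u \<in> V. E v u}"

end

theory Submission
  imports Defs
begin

definition ff :: "nat \<Rightarrow> nat \<Rightarrow> nat" where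
  "ff n v = (if v < n then 0 else if v = n then 1 else if v \<le> 2*n then 2
             else if v = 2*n+1 then 3 else 4)"

definition EE :: "nat \<Rightarrow> nat \<Rightarrow> nat \<Rightarrow> bool" where
  "EE n u v \<longleftrightarrow> u < 2*n+3 \<and> v < 2*n+3 \<and> u \<noteq> v \<and>
      (ff n u = ff n v \<or> c5_adj (ff n u) (ff n v))"

lemma adj_tab:
  "c5_adj 0 1" "c5_adj 1 0" "c5_adj 1 2" "c5_adj 2 1" "c5_adj 2 3" "c5_adj 3 2"
  "c5_adj 3 4" "c5_adj 4 3" "c5_adj 4 0" "c5_adj 0 4"
  "\<not> c5_adj 0 2" "\<not> c5_adj 2 0" "\<not> c5_adj 0 3" "\<not> c5_adj 3 0"
  "\<not> c5_adj 1 3" "\<not> c5_adj 3 1" "\<not> c5_adj 1 4" "\<not> c5_adj 4 1"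
  "\<not> c5_adj 2 4" "\<not> c5_adj 4 2"
  by (simp_all add: c5_adj_def)

lemma adj_tab1:
  "c5_adj 0 (Suc 0)" "c5_adj (Suc 0) 0" "c5_adj (Suc 0) 2" "c5_adj 2 (Suc 0)"
  "\<not> c5_adj (Suc 0) 3" "\<not> c5_adj 3 (Suc 0)" "\<not> c5_adj (Suc 0) 4" "\<not> c5_adj 4 (Suc 0)"
  by (simp_all add: c5_adj_def)

lemma blow: assumes "n \<ge> 1" shows "blowup_C5 {..<2*n+3} (EE n)"
  unfolding blowup_C5_def
proof (intro conjI)
  show "\<forall>u v. EE n u v \<longrightarrow> u \<in> {..<2*n+3} \<and> v \<in> {..<2*n+3}"
    by (auto simp: EE_def)
  show "\<exists>f. (\<forall>v\<in>{..<2*n+3}. f v < (5::nat)) \<and> (\<forall>x<5. \<exists>v\<in>{..<2*n+3}. f v = x) \<and>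
          (\<forall>u\<in>{..<2*n+3}. \<forall>v\<in>{..<2*n+3}. EE n u v \<longleftrightarrow> u \<noteq> v \<and> (f u = f v \<or> c5_adj (f u) (f v)))"
  proof (intro exI conjI)
    show "\<forall>v\<in>{..<2*n+3}. ff n v < 5" by (simp add: ff_def)
    show "\<forall>x<5. \<exists>v\<in>{..<2*n+3}. ff n v = x"
    proof (intro allI impI)
      fix x :: nat assume "x < 5"
      then have "x = 0 \<or> x = 1 \<or> x = 2 \<or> x = 3 \<or> x = 4" by auto
      then show "\<exists>v\<in>{..<2*n+3}. ff n v = x"
      proof (elim disjE)
        assume "x = 0" then show ?thesis using assms by (intro bexI[of _ 0]) (auto simp: ff_def)
      next
        assume "x = 1" then show ?thesis using assms by (intro bexI[of _ n]) (auto simp: ff_def)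
      next
        assume "x = 2" then show ?thesis using assms by (intro bexI[of _ "n+1"]) (auto simp: ff_def)
      next
        assume "x = 3" then show ?thesis using assms by (intro bexI[of _ "2*n+1"]) (auto simp: ff_def)
      next
        assume "x = 4" then show ?thesis using assms by (intro bexI[of _ "2*n+2"]) (auto simp: ff_def)
      qed
    qed
    show "\<forall>u\<in>{..<2*n+3}. \<forall>v\<in>{..<2*n+3}. EE n u v \<longleftrightarrow> u \<noteq> v \<and> (ff n u = ff n v \<or> c5_adj (ff n u) (ff n v))"
      by (auto simp: EE_def)
  qed
qed (simp)

lemma nb0: assumes "v < n" shows "{u \<in> {..<2*n+3}. EE n v u} = ({..<n} - {v}) \<union> {n, 2*n+2}"
  using assms by (auto simp: EE_def ff_def adj_tab adj_tab1 split: if_splits)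

lemma nb1: assumes "n \<ge> 1" shows "{u \<in> {..<2*n+3}. EE n n u} = {..<n} \<union> {n+1..2*n}"
  using assms by (auto simp: EE_def ff_def adj_tab adj_tab1 split: if_splits)

lemma nb2: assumes "n < v" "v \<le> 2*n" shows "{u \<in> {..<2*n+3}. EE n v u} = ({n+1..2*n} - {v}) \<union> {n, 2*n+1}"
  using assms by (auto simp: EE_def ff_def adj_tab adj_tab1 split: if_splits)

lemma nb3: assumes "n \<ge> 1" shows "{u \<in> {..<2*n+3}. EE n (2*n+1) u} = {n+1..2*n} \<union> {2*n+2}"
  using assms by (auto simp: EE_def ff_def adj_tab adj_tab1 split: if_splits)

lemma nb4: assumes "n \<ge> 1" shows "{u \<in> {..<2*n+3}. EE n (2*n+2) u} = {..<n} \<union> {2*n+1}"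
  using assms by (auto simp: EE_def ff_def adj_tab adj_tab1 split: if_splits)

lemma deg_all:
  assumes "n \<ge> 1" "v < 2*n+3"
  shows "degree {..<2*n+3} (EE n) v = (if v = n then 2*n else n+1)"
proof -
  have "v < n \<or> v = n \<or> (n < v \<and> v \<le> 2*n) \<or> v = 2*n+1 \<or> v = 2*n+2" using assms by linarith
  then show ?thesis
  proof (elim disjE conjE)
    assume h: "v < n"
    have "card (({..<n} - {v}) \<union> {n, 2*n+2}) = (n - 1) + 2"
      by (subst card_Un_disjoint) (use h in auto)
    then show ?thesis using h assms unfolding degree_def nb0[OF h] by simp
  next
    assume h: "v = n"
    have "card ({..<n} \<union> {n+1..2*n}) = n + n"
      by (subst card_Un_disjoint) auto
    then show ?thesis using h assms unfolding degree_def h nb1[OF assms(1)] by simp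
  next
    assume h: "n < v" "v \<le> 2*n"
    have "card (({n+1..2*n} - {v}) \<union> {n, 2*n+1}) = (n - 1) + 2"
      by (subst card_Un_disjoint) (use h in auto)
    then show ?thesis using h assms unfolding degree_def nb2[OF h] by simp
  next
    assume h: "v = 2*n+1"
    have "card ({n+1..2*n} \<union> {2*n+2}) = n + 1"
      by (subst card_Un_disjoint) auto
    then show ?thesis using h assms unfolding degree_def h nb3[OF assms(1)] by simp
  next
    assume h: "v = 2*n+2"
    have "card ({..<n} \<union> {2*n+1}) = n + 1"
      by (subst card_Un_disjoint) auto
    then show ?thesis using h assms unfolding degree_def h nb4[OF assms(1)] by simp
  qed
qed

lemma sum_eq:
  fixes g :: "nat \<Rightarrow> real"
  assumes "n \<ge> 1"
  shows "(\<Sum>v\<in>{..<2*n+3}. g (if v = n then 2*n else n+1)) = (2*n+2) * g (n+1) + g (2*n)"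
proof -
  have "{..<2*n+3} = insert n ({..<2*n+3} - {n})" by auto
  then have "(\<Sum>v\<in>{..<2*n+3}. g (if v = n then 2*n else n+1))
      = g (2*n) + (\<Sum>v\<in>{..<2*n+3} - {n}. g (if v = n then 2*n else n+1))"
    using sum.remove[of "{..<2*n+3}" n "\<lambda>v. g (if v = n then 2*n else n+1)"] by simp
  also have "(\<Sum>v\<in>{..<2*n+3} - {n}. g (if v = n then 2*n else n+1)) = (\<Sum>v\<in>{..<2*n+3} - {n}. g (n+1))"
    by (rule sum.cong) auto
  also have "\<dots> = (2*n+2) * g (n+1)" using assms by simp
  finally show ?thesis by simp
qed

theorem proposition4p2:
  fixes \<delta> :: nat
  shows "\<exists>(\<epsilon>::real) (V::nat set) E. \<epsilon> > 1/4 \<and> blowup_C5 V E \<and>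
           (\<forall>v\<in>V. degree V E v \<ge> \<delta>) \<and>
           (\<Sum>v\<in>V. 1 / (real (degree V E v) + \<epsilon>)) > 2"
proof -
  define n where "n = \<delta> + 1"
  define e :: real where "e = 1/4 + 1/(8*n)"
  have n1: "n \<ge> 1" by (simp add: n_def)
  have x1: "real n \<ge> 1" using n1 by simp
  have epos: "e > 1/4" using n1 by (simp add: e_def)
  have ele: "e \<le> 3/8" using x1 by (simp add: e_def field_simps)
  have "(\<Sum>v\<in>{..<2*n+3}. 1 / (real (degree {..<2*n+3} (EE n) v) + e))
      = (\<Sum>v\<in>{..<2*n+3}. (\<lambda>k. 1 / (real k + e)) (if v = n then 2*n else n+1))"
    by (rule sum.cong) (use n1 deg_all in auto)
  also have "\<dots> = (2*n+2) * (1 / (real (n+1) + e)) + 1 / (real (2*n) + e)"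
    using sum_eq[OF n1, of "\<lambda>k. 1 / (real k + e)"] by simp
  also have "\<dots> > 2"
  proof -
    have e8: "8 * real n * e = 2 * real n + 1" using x1 by (simp add: e_def field_simps)
    have ee: "2 * e * e < e" using ele epos by (simp add: mult_strict_right_mono)
    have key: "real n + 1 + e > 2 * e * (2 * real n + e)"
      using e8 ee by (simp add: algebra_simps)
    have p1: "real n + 1 + e > 0" "2 * real n + e > 0" using x1 epos by linarith+
    have k2: "2 * ((real n + 1 + e) * (2 * real n + e)) < (2*real n+2) * (2 * real n + e) + (real n + 1 + e)"
      using key by (simp add: algebra_simps)
    have fr: "(2*real n+2) / (real n + 1 + e) + 1 / (2 * real n + e)
        = ((2*real n+2) * (2 * real n + e) + (real n + 1 + e)) / ((real n + 1 + e) * (2 * real n + e))"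
      using p1 by (simp add: field_simps)
    have pp: "(real n + 1 + e) * (2 * real n + e) > 0" using p1 by simp
    have "(2*real n+2) / (real n + 1 + e) + 1 / (2 * real n + e) > 2"
      unfolding fr using k2 pp by (simp add: less_divide_eq)
    moreover have "(2*real n+2) / (real n + 1 + e) = (2 * real n + 2) * (1 / (real (n + 1) + e))"
      by (simp add: add_ac)
    ultimately show ?thesis by (simp add: add_ac)
  qed
  finally have S: "(\<Sum>v\<in>{..<2*n+3}. 1 / (real (degree {..<2*n+3} (EE n) v) + e)) > 2" .
  have D: "\<forall>v\<in>{..<2*n+3}. degree {..<2*n+3} (EE n) v \<ge> \<delta>"
    using deg_all[OF n1] by (auto simp: n_def)
  show ?thesis using epos blow[OF n1] D S by blast
qed

end
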